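(* Let $M$ be a compact $C^{\infty}$ Riemannian manifold and let $f,g,h$ be $C^{\infty}$-diffeomorphisms of $M$ satisfying $fh=hf$, $gh=hg$ and $[f,g]=h$ (so that they define an action of the Heisenberg group $\langle f,g,h\mid fh=hf,\ gh=hg,\ [f,g]=h\rangle$ on $M$). Then there exist constants $K,C>0$ such that $$\log\Vert Dh^{n}_{x}\Vert\leq K\sqrt{n}+C$$ for every $x\in M$ and every integer $n\geq 0$.
   Context: $Dh^{n}_{x}:T_xM\to T_{h^n(x)}M$ is the derivative of $h^{n}$ at $x$ and $\Vert\cdot\Vert$ is its operator norm with respect to the Riemannian metric. *)

theory Defs
  imports "HOL-Analysis.Analysis"
begin

primrec Ck_on :: "nat \<Rightarrow> 'a::euclidean_space set \<Rightarrow> ('a \<Rightarrow> 'b::real_normed_vector) \<Rightarrow> bool" where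
  "Ck_on 0 U f = continuous_on U f"
| "Ck_on (Suc k) U f =
     (\<exists>f'. (\<forall>x\<in>U. (f has_derivative f' x) (at x)) \<and> (\<forall>v. Ck_on k U (\<lambda>x. f' x v)))"

definition smooth_on :: "'a::euclidean_space set \<Rightarrow> ('a \<Rightarrow> 'b::real_normed_vector) \<Rightarrow> bool" where
  "smooth_on U f \<longleftrightarrow> (\<forall>k. Ck_on k U f)"

definition smooth_submanifold :: "'a::euclidean_space set \<Rightarrow> bool" where
  "smooth_submanifold M \<longleftrightarrow>
     (\<forall>p\<in>M. \<exists>U V (\<phi>::'a \<Rightarrow> 'a) \<psi> S. open U \<and> p \<in> U \<and> open V \<and> subspace S \<and>
        smooth_on U \<phi> \<and> smooth_on V \<psi> \<and> \<phi> ` U = V \<and>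
        (\<forall>x\<in>U. \<psi> (\<phi> x) = x) \<and> (\<forall>y\<in>V. \<phi> (\<psi> y) = y) \<and>
        \<phi> ` (M \<inter> U) = V \<inter> S)"

definition smooth_map_on :: "'a::euclidean_space set \<Rightarrow> ('a \<Rightarrow> 'a) \<Rightarrow> bool" where
  "smooth_map_on M f \<longleftrightarrow>
     (\<forall>p\<in>M. \<exists>U F. open U \<and> p \<in> U \<and> smooth_on U F \<and> (\<forall>x\<in>M \<inter> U. F x = f x))"

definition diffeomorphism_on :: "'a::euclidean_space set \<Rightarrow> ('a \<Rightarrow> 'a) \<Rightarrow> bool" where
  "diffeomorphism_on M f \<longleftrightarrow>
     bij_betw f M M \<and> smooth_map_on M f \<and> smooth_map_on M (inv_into M f)"

definition tangent_space :: "'a::euclidean_space set \<Rightarrow> 'a \<Rightarrow> 'a set" where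
  "tangent_space M x =
     {v. \<exists>\<gamma>. (\<forall>t. \<gamma> t \<in> M) \<and> \<gamma> 0 = x \<and> (\<gamma> has_vector_derivative v) (at 0)}"

definition mderiv :: "'a::euclidean_space set \<Rightarrow> ('a \<Rightarrow> 'a) \<Rightarrow> 'a \<Rightarrow> 'a \<Rightarrow> 'a" where
  "mderiv M f x v =
     (THE w. \<forall>\<gamma>. (\<forall>t. \<gamma> t \<in> M) \<and> \<gamma> 0 = x \<and> (\<gamma> has_vector_derivative v) (at 0)
                 \<longrightarrow> ((f \<circ> \<gamma>) has_vector_derivative w) (at 0))"

text \<open>Operator norm of Df_x w.r.t. the Riemannian metric induced by the ambient inner product.\<close>
definition mderiv_norm :: "'a::euclidean_space set \<Rightarrow> ('a \<Rightarrow> 'a) \<Rightarrow> 'a \<Rightarrow> real" where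
  "mderiv_norm M f x =
     Sup {norm (mderiv M f x v) | v. v \<in> tangent_space M x \<and> norm v \<le> 1}"

end

theory Submission
  imports Defs
begin

definition Good :: "'a::euclidean_space set \<Rightarrow> ('a \<Rightarrow> 'a) \<Rightarrow> real \<Rightarrow> bool" where
  "Good M \<phi> L \<longleftrightarrow> \<phi> ` M \<subseteq> M \<and> (\<forall>x\<in>M. \<exists>A. (\<forall>\<gamma> v. (\<forall>t. \<gamma> t \<in> M) \<and> \<gamma> 0 = x \<and> (\<gamma> has_vector_derivative v) (at 0)
        \<longrightarrow> ((\<phi> \<circ> \<gamma>) has_vector_derivative A v) (at 0)) \<and> (\<forall>v\<in>tangent_space M x. norm (A v) \<le> L * norm v))"

lemma good_cong:
  assumes "Good M \<phi> L" "\<forall>x\<in>M. \<psi> x = \<phi> x" shows "Good M \<psi> L"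
proof -
  have e: "\<psi> \<circ> \<gamma> = \<phi> \<circ> \<gamma>" if "\<forall>t. \<gamma> t \<in> M" for \<gamma>
    using that assms(2) by auto
  have im: "\<psi> ` M = \<phi> ` M" using assms(2) by auto
  show ?thesis using assms(1) unfolding Good_def im
    apply (intro conjI ballI)
     apply blast
    apply (drule conjunct2)
    apply (drule (1) bspec)
    apply (erule exE)
    subgoal for x A by (rule exI[of _ A]) (auto simp: e)
    done
qed

lemma GoodD:
  assumes "Good M \<phi> L" "x \<in> M"
  obtains A where "\<And>\<gamma> v. (\<forall>t. \<gamma> t \<in> M) \<Longrightarrow> \<gamma> 0 = x \<Longrightarrow> (\<gamma> has_vector_derivative v) (at 0)
        \<Longrightarrow> ((\<phi> \<circ> \<gamma>) has_vector_derivative A v) (at 0)" and "\<And>v. v\<in>tangent_space M x \<Longrightarrow> norm (A v) \<le> L * norm v"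
proof -
  have "\<exists>A. (\<forall>\<gamma> v. (\<forall>t. \<gamma> t \<in> M) \<and> \<gamma> 0 = x \<and> (\<gamma> has_vector_derivative v) (at 0)
        \<longrightarrow> ((\<phi> \<circ> \<gamma>) has_vector_derivative A v) (at 0)) \<and> (\<forall>v\<in>tangent_space M x. norm (A v) \<le> L * norm v)"
    using assms(1)[unfolded Good_def, THEN conjunct2] assms(2) by (rule bspec)
  then obtain A where A: "(\<forall>\<gamma> v. (\<forall>t. \<gamma> t \<in> M) \<and> \<gamma> 0 = x \<and> (\<gamma> has_vector_derivative v) (at 0)
        \<longrightarrow> ((\<phi> \<circ> \<gamma>) has_vector_derivative A v) (at 0))" "(\<forall>v\<in>tangent_space M x. norm (A v) \<le> L * norm v)"
    by (elim exE conjE)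
  show ?thesis
    apply (rule that[of A])
    using A(1) apply simp
    using A(2) apply simp
    done
qed

lemma good_mono: assumes "Good M \<phi> L" "L \<le> L'" shows "Good M \<phi> L'"
  unfolding Good_def
proof (intro conjI ballI)
  show "\<phi> ` M \<subseteq> M" using assms unfolding Good_def by blast
  fix x assume x: "x \<in> M"
  obtain A where A: "\<And>\<gamma> v. (\<forall>t. \<gamma> t \<in> M) \<Longrightarrow> \<gamma> 0 = x \<Longrightarrow> (\<gamma> has_vector_derivative v) (at 0)
        \<Longrightarrow> ((\<phi> \<circ> \<gamma>) has_vector_derivative A v) (at 0)" and Ab: "\<And>v. v\<in>tangent_space M x \<Longrightarrow> norm (A v) \<le> L * norm v"
    using GoodD[OF assms(1) x] by blast
  have "norm (A v) \<le> L' * norm v" if "v\<in>tangent_space M x" for v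
    using Ab[OF that] mult_right_mono[OF assms(2) norm_ge_zero[of v]] by linarith
  then show "\<exists>A. (\<forall>\<gamma> v. (\<forall>t. \<gamma> t \<in> M) \<and> \<gamma> 0 = x \<and> (\<gamma> has_vector_derivative v) (at 0)
        \<longrightarrow> ((\<phi> \<circ> \<gamma>) has_vector_derivative A v) (at 0)) \<and> (\<forall>v\<in>tangent_space M x. norm (A v) \<le> L' * norm v)"
    using A by blast
qed

lemma good_comp:
  assumes p: "Good M \<phi> L1" and q: "Good M \<psi> L2" and L2: "L2 \<ge> 0"
  shows "Good M (\<psi> \<circ> \<phi>) (L2 * L1)"
  unfolding Good_def
proof (intro conjI ballI)
  show "(\<psi> \<circ> \<phi>) ` M \<subseteq> M" using p q unfolding Good_def image_subset_iff by simp
next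
  fix x assume x: "x \<in> M"
  obtain A where A: "\<And>\<gamma> v. (\<forall>t. \<gamma> t \<in> M) \<Longrightarrow> \<gamma> 0 = x \<Longrightarrow> (\<gamma> has_vector_derivative v) (at 0)
        \<Longrightarrow> ((\<phi> \<circ> \<gamma>) has_vector_derivative A v) (at 0)" and Ab: "\<And>v. v\<in>tangent_space M x \<Longrightarrow> norm (A v) \<le> L1 * norm v"
    using GoodD[OF p x] by blast
  have px: "\<phi> x \<in> M" using p x unfolding Good_def by auto
  have pM: "\<phi> y \<in> M" if "y \<in> M" for y using p that unfolding Good_def by auto
  obtain B where B: "\<And>\<gamma> v. (\<forall>t. \<gamma> t \<in> M) \<Longrightarrow> \<gamma> 0 = \<phi> x \<Longrightarrow> (\<gamma> has_vector_derivative v) (at 0)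
        \<Longrightarrow> ((\<psi> \<circ> \<gamma>) has_vector_derivative B v) (at 0)" and Bb: "\<And>v. v\<in>tangent_space M (\<phi> x) \<Longrightarrow> norm (B v) \<le> L2 * norm v"
    using GoodD[OF q px] by blast
  show "\<exists>C. (\<forall>\<gamma> v. (\<forall>t. \<gamma> t \<in> M) \<and> \<gamma> 0 = x \<and> (\<gamma> has_vector_derivative v) (at 0)
        \<longrightarrow> (((\<psi> \<circ> \<phi>) \<circ> \<gamma>) has_vector_derivative C v) (at 0)) \<and> (\<forall>v\<in>tangent_space M x. norm (C v) \<le> L2 * L1 * norm v)"
  proof (intro exI[of _ "\<lambda>v. B (A v)"] conjI allI impI ballI)
    fix \<gamma> v assume h: "(\<forall>t. \<gamma> t \<in> M) \<and> \<gamma> 0 = x \<and> (\<gamma> has_vector_derivative v) (at 0)"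
    then have "((\<phi> \<circ> \<gamma>) has_vector_derivative A v) (at 0)" using A by blast
    moreover have "\<forall>t. (\<phi> \<circ> \<gamma>) t \<in> M" using h pM by auto
    moreover have "(\<phi> \<circ> \<gamma>) 0 = \<phi> x" using h by auto
    ultimately have "((\<psi> \<circ> (\<phi> \<circ> \<gamma>)) has_vector_derivative B (A v)) (at 0)" using B by blast
    then show "(((\<psi> \<circ> \<phi>) \<circ> \<gamma>) has_vector_derivative B (A v)) (at 0)" by (simp add: comp_assoc)
  next
    fix v assume v: "v \<in> tangent_space M x"
    then obtain \<gamma> where g: "\<forall>t. \<gamma> t \<in> M" "\<gamma> 0 = x" "(\<gamma> has_vector_derivative v) (at 0)"
      unfolding tangent_space_def by blast
    then have "((\<phi> \<circ> \<gamma>) has_vector_derivative A v) (at 0)" using A by blast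
    moreover have "\<forall>t. (\<phi> \<circ> \<gamma>) t \<in> M" using g pM by auto
    moreover have "(\<phi> \<circ> \<gamma>) 0 = \<phi> x" using g by auto
    ultimately have "A v \<in> tangent_space M (\<phi> x)" unfolding tangent_space_def by blast
    then have "norm (B (A v)) \<le> L2 * norm (A v)" by (rule Bb)
    also have "\<dots> \<le> L2 * (L1 * norm v)" using Ab[OF v] L2 by (rule mult_left_mono)
    finally show "norm (B (A v)) \<le> L2 * L1 * norm v" by (simp add: mult.assoc)
  qed
qed

lemma good_id: "Good M id 1"
  unfolding Good_def by (auto intro!: exI[of _ "\<lambda>v. v"])

lemma good_funpow: assumes "Good M \<phi> L" "L \<ge> 0" shows "Good M (\<phi> ^^ n) (L ^ n)"
proof (induction n)
  case 0 then show ?case using good_id[of M] by (simp add: id_def)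
next
  case (Suc n)
  have "Good M (\<phi> \<circ> (\<phi> ^^ n)) (L * L ^ n)" by (rule good_comp[OF Suc assms(1) assms(2)])
  then show ?case by (simp add: comp_def)
qed

lemma zero_tangent: "x \<in> M \<Longrightarrow> 0 \<in> tangent_space M x"
  unfolding tangent_space_def by (auto intro!: exI[of _ "\<lambda>t. x"])

lemma good_norm:
  assumes "Good M \<phi> L" "x \<in> M" "L \<ge> 0"
  shows "0 \<le> mderiv_norm M \<phi> x \<and> mderiv_norm M \<phi> x \<le> L"
proof -
  obtain A where A: "\<And>\<gamma> v. (\<forall>t. \<gamma> t \<in> M) \<Longrightarrow> \<gamma> 0 = x \<Longrightarrow> (\<gamma> has_vector_derivative v) (at 0)
        \<Longrightarrow> ((\<phi> \<circ> \<gamma>) has_vector_derivative A v) (at 0)" and Ab: "\<And>v. v\<in>tangent_space M x \<Longrightarrow> norm (A v) \<le> L * norm v"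
    using GoodD[OF assms(1,2)] by blast
  have md: "mderiv M \<phi> x v = A v" if v: "v \<in> tangent_space M x" for v
  proof -
    obtain \<gamma>0 where g: "\<forall>t. \<gamma>0 t \<in> M" "\<gamma>0 0 = x" "(\<gamma>0 has_vector_derivative v) (at 0)"
      using v unfolding tangent_space_def by blast
    show ?thesis unfolding mderiv_def
    proof (rule the_equality)
      show "\<forall>\<gamma>. (\<forall>t. \<gamma> t \<in> M) \<and> \<gamma> 0 = x \<and> (\<gamma> has_vector_derivative v) (at 0) \<longrightarrow> ((\<phi> \<circ> \<gamma>) has_vector_derivative A v) (at 0)"
        using A by blast
    next
      fix w assume "\<forall>\<gamma>. (\<forall>t. \<gamma> t \<in> M) \<and> \<gamma> 0 = x \<and> (\<gamma> has_vector_derivative v) (at 0) \<longrightarrow> ((\<phi> \<circ> \<gamma>) has_vector_derivative w) (at 0)"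
      then have "((\<phi> \<circ> \<gamma>0) has_vector_derivative w) (at 0)" using g by blast
      moreover have "((\<phi> \<circ> \<gamma>0) has_vector_derivative A v) (at 0)" using A g by blast
      ultimately show "w = A v" using vector_derivative_unique_at by blast
    qed
  qed
  let ?S = "{norm (mderiv M \<phi> x v) | v. v \<in> tangent_space M x \<and> norm v \<le> 1}"
  have ne: "?S \<noteq> {}" using zero_tangent[OF assms(2)] by force
  have ub: "\<And>s. s \<in> ?S \<Longrightarrow> s \<le> L"
  proof -
    fix s assume "s \<in> ?S"
    then obtain v where v: "v \<in> tangent_space M x" "norm v \<le> 1" "s = norm (mderiv M \<phi> x v)" by blast
    have "s \<le> L * norm v" using v md Ab by simp
    also have "\<dots> \<le> L" using v assms(3) by (simp add: mult_left_le)
    finally show "s \<le> L" .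
  qed
  have "mderiv_norm M \<phi> x \<le> L" unfolding mderiv_norm_def by (rule cSup_least[OF ne ub])
  moreover have "0 \<le> mderiv_norm M \<phi> x" unfolding mderiv_norm_def
  proof -
    have "norm (mderiv M \<phi> x 0) \<in> ?S" using zero_tangent[OF assms(2)] by force
    then have "norm (mderiv M \<phi> x 0) \<le> Sup ?S" by (rule cSup_upper) (rule bdd_aboveI[of _ L], rule ub)
    then show "0 \<le> Sup ?S" by (meson norm_ge_zero order_trans)
  qed
  ultimately show ?thesis by simp
qed

lemma linear_basis_bound:
  fixes T :: "'a::euclidean_space \<Rightarrow> 'b::real_normed_vector"
  assumes "linear T"
  shows "norm (T v) \<le> (\<Sum>b\<in>Basis. norm (T b)) * norm v"
proof -
  have "T v = T (\<Sum>b\<in>Basis. (v \<bullet> b) *\<^sub>R b)" by (simp add: euclidean_representation)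
  also have "\<dots> = (\<Sum>b\<in>Basis. (v \<bullet> b) *\<^sub>R T b)"
    using assms by (simp add: linear_sum linear_scale)
  finally have eq: "T v = (\<Sum>b\<in>Basis. (v \<bullet> b) *\<^sub>R T b)" .
  have "norm (T v) \<le> (\<Sum>b\<in>Basis. norm ((v \<bullet> b) *\<^sub>R T b))"
    unfolding eq by (rule norm_sum)
  also have "\<dots> \<le> (\<Sum>b\<in>Basis. norm v * norm (T b))"
    by (intro sum_mono) (simp add: Basis_le_norm mult_right_mono)
  finally show ?thesis by (simp add: sum_distrib_left mult.commute)
qed

lemma local_bound:
  assumes sm: "smooth_map_on M \<phi>" and p: "p \<in> M"
  shows "\<exists>N B. open N \<and> p \<in> N \<and> (\<forall>x\<in>M \<inter> N. \<exists>A.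
     (\<forall>\<gamma> v. (\<forall>t. \<gamma> t \<in> M) \<and> \<gamma> 0 = x \<and> (\<gamma> has_vector_derivative v) (at 0)
        \<longrightarrow> ((\<phi> \<circ> \<gamma>) has_vector_derivative A v) (at 0)) \<and> (\<forall>v. norm (A v) \<le> B * norm v))"
proof -
  obtain U F where U: "open U" "p \<in> U" "smooth_on U F" and FU: "\<forall>x\<in>M \<inter> U. F x = \<phi> x"
    using sm p unfolding smooth_map_on_def by blast
  have "Ck_on (Suc 0) U F" using U(3) unfolding smooth_on_def by blast
  then obtain F' where F': "\<And>x. x \<in> U \<Longrightarrow> (F has_derivative F' x) (at x)"
    and cF': "\<And>v. continuous_on U (\<lambda>x. F' x v)" by auto
  define Bf where "Bf x = (\<Sum>b\<in>Basis. norm (F' x b))" for x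
  have cB: "continuous_on U Bf" unfolding Bf_def
    by (intro continuous_on_sum continuous_on_norm cF')
  then obtain d where d: "d > 0" "\<And>x. x \<in> U \<Longrightarrow> dist x p < d \<Longrightarrow> dist (Bf x) (Bf p) < 1"
    using continuous_on_iff[THEN iffD1, OF cB, rule_format, OF U(2) zero_less_one] by blast
  show ?thesis
  proof (intro exI[of _ "U \<inter> ball p d"] exI[of _ "Bf p + 1"] conjI ballI)
    show "open (U \<inter> ball p d)" using U by auto
    show "p \<in> U \<inter> ball p d" using U d by auto
    fix x assume x: "x \<in> M \<inter> (U \<inter> ball p d)"
    have lin: "linear (F' x)" using F'[of x] x has_derivative_linear by blast
    show "\<exists>A. (\<forall>\<gamma> v. (\<forall>t. \<gamma> t \<in> M) \<and> \<gamma> 0 = x \<and> (\<gamma> has_vector_derivative v) (at 0)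
        \<longrightarrow> ((\<phi> \<circ> \<gamma>) has_vector_derivative A v) (at 0)) \<and> (\<forall>v. norm (A v) \<le> (Bf p + 1) * norm v)"
    proof (intro exI[of _ "F' x"] conjI allI impI)
      fix v
      have "Bf x \<le> Bf p + 1" using d(2)[of x] x by (auto simp: dist_commute dist_real_def)
      then show "norm (F' x v) \<le> (Bf p + 1) * norm v"
        using linear_basis_bound[OF lin, of v] unfolding Bf_def[symmetric]
        using mult_right_mono[OF _ norm_ge_zero, of "Bf x" "Bf p + 1" v] by linarith
    next
      fix \<gamma> v assume h: "(\<forall>t. \<gamma> t \<in> M) \<and> \<gamma> 0 = x \<and> (\<gamma> has_vector_derivative v) (at 0)"
      have "(\<gamma> has_derivative (\<lambda>t. t *\<^sub>R v)) (at 0)" using h by (simp add: has_vector_derivative_def)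
      moreover have "(F has_derivative F' x) (at (\<gamma> 0))" using F'[of x] x h by simp
      ultimately have "((F \<circ> \<gamma>) has_derivative (F' x \<circ> (\<lambda>t. t *\<^sub>R v))) (at 0)"
        by (rule diff_chain_at)
      moreover have "(F' x \<circ> (\<lambda>t. t *\<^sub>R v)) = (\<lambda>t. t *\<^sub>R F' x v)"
        using lin by (auto simp: linear_scale)
      ultimately have d1: "((F \<circ> \<gamma>) has_vector_derivative F' x v) (at 0)"
        by (simp add: has_vector_derivative_def)
      have "continuous (at 0) \<gamma>" using h has_vector_derivative_continuous by blast
      then have "isCont \<gamma> 0" by simp
      then have "eventually (\<lambda>t. \<gamma> t \<in> U) (at 0)"
        using U(1) x h unfolding isCont_def by (intro topological_tendstoD) auto
      then obtain e where e: "e > 0" "\<And>t. t \<noteq> 0 \<Longrightarrow> dist t 0 < e \<Longrightarrow> \<gamma> t \<in> U"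
        unfolding eventually_at by blast
      show "((\<phi> \<circ> \<gamma>) has_vector_derivative F' x v) (at 0)"
      proof (rule has_vector_derivative_transform_within[OF d1 e(1)])
        show "(0::real) \<in> UNIV" by simp
        fix t :: real assume "dist t 0 < e"
        then have "\<gamma> t \<in> U" using e(2)[of t] h x by (cases "t = 0") auto
        then show "(F \<circ> \<gamma>) t = (\<phi> \<circ> \<gamma>) t" using FU h by auto
      qed
    qed
  qed
qed

lemma good_base:
  assumes cM: "compact M" and sm: "smooth_map_on M \<phi>" and im: "\<phi> ` M \<subseteq> M"
  shows "\<exists>L\<ge>0. Good M \<phi> L"
proof -
  have "\<forall>p\<in>M. \<exists>N B. open N \<and> p \<in> N \<and> (\<forall>x\<in>M \<inter> N. \<exists>A.
     (\<forall>\<gamma> v. (\<forall>t. \<gamma> t \<in> M) \<and> \<gamma> 0 = x \<and> (\<gamma> has_vector_derivative v) (at 0)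
        \<longrightarrow> ((\<phi> \<circ> \<gamma>) has_vector_derivative A v) (at 0)) \<and> (\<forall>v. norm (A v) \<le> B * norm v))"
    using local_bound[OF sm] by blast
  then obtain N B where NB: "\<And>p. p \<in> M \<Longrightarrow> open (N p) \<and> p \<in> N p \<and> (\<forall>x\<in>M \<inter> N p. \<exists>A.
     (\<forall>\<gamma> v. (\<forall>t. \<gamma> t \<in> M) \<and> \<gamma> 0 = x \<and> (\<gamma> has_vector_derivative v) (at 0)
        \<longrightarrow> ((\<phi> \<circ> \<gamma>) has_vector_derivative A v) (at 0)) \<and> (\<forall>v. norm (A v) \<le> B p * norm v))"
    by metis
  have "M \<subseteq> (\<Union>c\<in>M. N c)" using NB by blast
  then obtain C where C: "C \<subseteq> M" "finite C" "M \<subseteq> (\<Union>c\<in>C. N c)"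
    using compactE_image[OF cM, of M N] NB by blast
  define L where "L = (\<Sum>c\<in>C. \<bar>B c\<bar>)"
  have L0: "L \<ge> 0" unfolding L_def by (simp add: sum_nonneg)
  have "Good M \<phi> L" unfolding Good_def
  proof (intro conjI ballI im)
    fix x assume x: "x \<in> M"
    then obtain c where c: "c \<in> C" "x \<in> N c" using C by blast
    then have cM': "c \<in> M" using C by blast
    obtain A where A: "\<forall>\<gamma> v. (\<forall>t. \<gamma> t \<in> M) \<and> \<gamma> 0 = x \<and> (\<gamma> has_vector_derivative v) (at 0)
        \<longrightarrow> ((\<phi> \<circ> \<gamma>) has_vector_derivative A v) (at 0)" and Ab: "\<forall>v. norm (A v) \<le> B c * norm v"
      using NB[OF cM'] x c by blast
    have BL: "B c \<le> L" unfolding L_def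
      using member_le_sum[of c C "\<lambda>c. \<bar>B c\<bar>"] c C(2) by force
    have "norm (A v) \<le> L * norm v" for v
      using Ab mult_right_mono[OF BL norm_ge_zero[of v]] by (meson order_trans)
    then show "\<exists>A. (\<forall>\<gamma> v. (\<forall>t. \<gamma> t \<in> M) \<and> \<gamma> 0 = x \<and> (\<gamma> has_vector_derivative v) (at 0)
        \<longrightarrow> ((\<phi> \<circ> \<gamma>) has_vector_derivative A v) (at 0)) \<and> (\<forall>v\<in>tangent_space M x. norm (A v) \<le> L * norm v)"
      using A by blast
  qed
  then show ?thesis using L0 by blast
qed

lemma sq_split: "\<exists>a r. m = r + a * a \<and> r \<le> 2 * a" for m :: nat
proof (induction m)
  case 0 then show ?case by auto
next
  case (Suc m)
  then obtain a r where ar: "m = r + a * a" "r \<le> 2 * a" by blast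
  show ?case
  proof (cases "r < 2 * a")
    case True then show ?thesis using ar by (intro exI[of _ a] exI[of _ "Suc r"]) auto
  next
    case False then show ?thesis using ar by (intro exI[of _ "Suc a"] exI[of _ 0]) auto
  qed
qed

lemma pow_in: "(\<And>x. x \<in> M \<Longrightarrow> \<phi> x \<in> M) \<Longrightarrow> x \<in> M \<Longrightarrow> (\<phi> ^^ k) x \<in> M"
  by (induction k) auto

lemma comm_pow:
  assumes "\<And>x. x \<in> M \<Longrightarrow> \<psi> x \<in> M" "\<And>x. x \<in> M \<Longrightarrow> h x \<in> M"
    "\<And>x. x \<in> M \<Longrightarrow> \<psi> (h x) = h (\<psi> x)" "x \<in> M"
  shows "\<psi> ((h ^^ k) x) = (h ^^ k) (\<psi> x)"
  using assms(4)
proof (induction k)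
  case 0 then show ?case by simp
next
  case (Suc k)
  have "(h ^^ k) x \<in> M" using pow_in[of M h x k] assms(2) Suc by blast
  then show ?case using Suc assms(3) by simp
qed

theorem theorem5:
  fixes M :: "'a::euclidean_space set" and f g h :: "'a \<Rightarrow> 'a"
  assumes "smooth_submanifold M" and "compact M"
    and "diffeomorphism_on M f" and "diffeomorphism_on M g" and "diffeomorphism_on M h"
    and "\<forall>x\<in>M. f (h x) = h (f x)" and "\<forall>x\<in>M. g (h x) = h (g x)"
    and "\<forall>x\<in>M. f (g (inv_into M f (inv_into M g x))) = h x"
  shows "\<exists>K C. K > 0 \<and> C > 0 \<and>
           (\<forall>x\<in>M. \<forall>n::nat. ln (mderiv_norm M (h ^^ n) x) \<le> K * sqrt (real n) + C)"
proof -
  define fi where "fi = inv_into M f"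
  define gi where "gi = inv_into M g"
  have bf: "bij_betw f M M" using assms(3) unfolding diffeomorphism_on_def by (rule conjunct1)
  have bg: "bij_betw g M M" using assms(4) unfolding diffeomorphism_on_def by (rule conjunct1)
  have bh: "bij_betw h M M" using assms(5) unfolding diffeomorphism_on_def by (rule conjunct1)
  have sf: "f ` M = M" by (rule bij_betw_imp_surj_on[OF bf])
  have sg: "g ` M = M" by (rule bij_betw_imp_surj_on[OF bg])
  have if_: "inj_on f M" by (rule bij_betw_imp_inj_on[OF bf])
  have ig: "inj_on g M" by (rule bij_betw_imp_inj_on[OF bg])
  have fM: "\<And>x. x \<in> M \<Longrightarrow> f x \<in> M" by (rule bij_betw_apply[OF bf])
  have gM: "\<And>x. x \<in> M \<Longrightarrow> g x \<in> M" by (rule bij_betw_apply[OF bg])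
  have hM: "\<And>x. x \<in> M \<Longrightarrow> h x \<in> M" by (rule bij_betw_apply[OF bh])
  have fiM: "fi x \<in> M" if "x \<in> M" for x unfolding fi_def
    using inv_into_into[of x f M] sf that by simp
  have giM: "gi x \<in> M" if "x \<in> M" for x unfolding gi_def
    using inv_into_into[of x g M] sg that by simp
  have ffi: "f (fi x) = x" if "x \<in> M" for x unfolding fi_def
    using f_inv_into_f[of x f M] sf that by simp
  have ggi: "g (gi x) = x" if "x \<in> M" for x unfolding gi_def
    using f_inv_into_f[of x g M] sg that by simp
  have fif: "fi (f x) = x" if "x \<in> M" for x unfolding fi_def
    using inv_into_f_f[OF if_ that] .
  have gig: "gi (g x) = x" if "x \<in> M" for x unfolding gi_def
    using inv_into_f_f[OF ig that] .
  have fh: "\<And>x. x \<in> M \<Longrightarrow> f (h x) = h (f x)" using assms(6) by blast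
  have gh: "\<And>x. x \<in> M \<Longrightarrow> g (h x) = h (g x)" using assms(7) by blast
  have comm: "\<And>x. x \<in> M \<Longrightarrow> f (g (fi (gi x))) = h x" using assms(8) unfolding fi_def gi_def by blast
  have fg: "f (g y) = h (g (f y))" if y: "y \<in> M" for y
  proof -
    have "g (f y) \<in> M" using y fM gM by blast
    then have "f (g (fi (gi (g (f y))))) = h (g (f y))" by (rule comm)
    then show ?thesis using y fM gig fif by simp
  qed
  have fpow: "(f ^^ k) x \<in> M" if "x \<in> M" for k x using that by (induction k) (auto intro: fM)
  have gpow: "(g ^^ k) x \<in> M" if "x \<in> M" for k x using that by (induction k) (auto intro: gM)
  have fipow: "(fi ^^ k) x \<in> M" if "x \<in> M" for k x using that by (induction k) (auto intro: fiM)
  have gipow: "(gi ^^ k) x \<in> M" if "x \<in> M" for k x using that by (induction k) (auto intro: giM)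
  have fhk: "f ((h ^^ k) x) = (h ^^ k) (f x)" if "x \<in> M" for k x
    using comm_pow[of M f h x k, OF fM hM fh that] .
  have ghk: "g ((h ^^ k) x) = (h ^^ k) (g x)" if "x \<in> M" for k x
    using comm_pow[of M g h x k, OF gM hM gh that] .
  have fgb: "f ((g ^^ b) y) = (h ^^ b) ((g ^^ b) (f y))" if y: "y \<in> M" for b y
  proof (induction b)
    case 0 then show ?case by simp
  next
    case (Suc b)
    have "f ((g ^^ Suc b) y) = f (g ((g ^^ b) y))" by simp
    also have "\<dots> = h (g (f ((g ^^ b) y)))" using fg gpow[OF y] by blast
    also have "\<dots> = h (g ((h ^^ b) ((g ^^ b) (f y))))" using Suc by simp
    also have "\<dots> = h ((h ^^ b) (g ((g ^^ b) (f y))))"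
      using ghk[OF gpow[OF fM[OF y]]] by simp
    also have "\<dots> = (h ^^ Suc b) ((g ^^ Suc b) (f y))" by (simp add: funpow_swap1)
    finally show ?case .
  qed
  have fagb: "(f ^^ a) ((g ^^ b) y) = (h ^^ (a * b)) ((g ^^ b) ((f ^^ a) y))" if y: "y \<in> M" for a b y
  proof (induction a)
    case 0 then show ?case by simp
  next
    case (Suc a)
    have fay: "(f ^^ a) y \<in> M" using fpow[OF y] .
    have "(f ^^ Suc a) ((g ^^ b) y) = f ((h ^^ (a * b)) ((g ^^ b) ((f ^^ a) y)))" using Suc by simp
    also have "\<dots> = (h ^^ (a * b)) (f ((g ^^ b) ((f ^^ a) y)))"
      using fhk[OF gpow[OF fay]] by simp
    also have "\<dots> = (h ^^ (a * b)) ((h ^^ b) ((g ^^ b) (f ((f ^^ a) y))))"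
      using fgb[OF fay] by simp
    also have "\<dots> = (h ^^ (a * b + b)) ((g ^^ b) (f ((f ^^ a) y)))"
      by (simp only: funpow_add comp_apply)
    also have "\<dots> = (h ^^ (Suc a * b)) ((g ^^ b) ((f ^^ Suc a) y))"
      by (simp add: add.commute)
    finally show ?case .
  qed
  have inv_pow: "(\<phi> ^^ a) ((\<phi>i ^^ a) z) = z"
    if "\<And>x. x \<in> M \<Longrightarrow> \<phi>i x \<in> M" "\<And>x. x \<in> M \<Longrightarrow> \<phi> (\<phi>i x) = x" "z \<in> M" for \<phi> \<phi>i :: "'a \<Rightarrow> 'a" and a z
    using that(3)
  proof (induction a arbitrary: z)
    case 0 then show ?case by simp
  next
    case (Suc a)
    have eq1: "(\<phi> ^^ Suc a) ((\<phi>i ^^ Suc a) z) = (\<phi> ^^ a) (\<phi> (\<phi>i ((\<phi>i ^^ a) z)))"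
      by (simp add: funpow_swap1)
    have "(\<phi>i ^^ a) z \<in> M" using pow_in[of M \<phi>i z a] that(1) Suc.prems by blast
    then have eq2: "\<phi> (\<phi>i ((\<phi>i ^^ a) z)) = (\<phi>i ^^ a) z" using that(2) by blast
    show ?case using eq1 eq2 Suc.IH Suc.prems by simp
  qed
  have sqid: "(f ^^ a) ((g ^^ a) ((fi ^^ a) ((gi ^^ a) z))) = (h ^^ (a * a)) z" if z: "z \<in> M" for a z
  proof -
    have gz: "(gi ^^ a) z \<in> M" using gipow[OF z] .
    have y: "(fi ^^ a) ((gi ^^ a) z) \<in> M" using fipow[OF gz] .
    have "(f ^^ a) ((g ^^ a) ((fi ^^ a) ((gi ^^ a) z))) = (h ^^ (a * a)) ((g ^^ a) ((f ^^ a) ((fi ^^ a) ((gi ^^ a) z))))"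
      by (rule fagb[OF y])
    also have "(f ^^ a) ((fi ^^ a) ((gi ^^ a) z)) = (gi ^^ a) z" by (rule inv_pow[OF fiM ffi gz])
    also have "(g ^^ a) ((gi ^^ a) z) = z" by (rule inv_pow[OF giM ggi z])
    finally show ?thesis .
  qed
  have dfi: "smooth_map_on M fi" using assms(3) unfolding diffeomorphism_on_def fi_def by (elim conjE)
  have dgi: "smooth_map_on M gi" using assms(4) unfolding diffeomorphism_on_def gi_def by (elim conjE)
  have df: "smooth_map_on M f" using assms(3) unfolding diffeomorphism_on_def by (elim conjE)
  have dg: "smooth_map_on M g" using assms(4) unfolding diffeomorphism_on_def by (elim conjE)
  have dh: "smooth_map_on M h" using assms(5) unfolding diffeomorphism_on_def by (elim conjE)
  obtain L1 where L1: "L1 \<ge> 0" "Good M f L1" using good_base[OF assms(2) df] fM by blast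
  obtain L2 where L2: "L2 \<ge> 0" "Good M g L2" using good_base[OF assms(2) dg] gM by blast
  obtain L3 where L3: "L3 \<ge> 0" "Good M h L3" using good_base[OF assms(2) dh] hM by blast
  obtain L4 where L4: "L4 \<ge> 0" "Good M fi L4" using good_base[OF assms(2) dfi] fiM by blast
  obtain L5 where L5: "L5 \<ge> 0" "Good M gi L5" using good_base[OF assms(2) dgi] giM by blast
  define L where "L = 1 + L1 + L2 + L3 + L4 + L5"
  have Lge: "L \<ge> 1" using L1 L2 L3 L4 L5 unfolding L_def by linarith
  have Gf: "Good M f L" by (rule good_mono[OF L1(2)]) (use L2 L3 L4 L5 in \<open>simp add: L_def\<close>)
  have Gg: "Good M g L" by (rule good_mono[OF L2(2)]) (use L1 L3 L4 L5 in \<open>simp add: L_def\<close>)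
  have Gh: "Good M h L" by (rule good_mono[OF L3(2)]) (use L1 L2 L4 L5 in \<open>simp add: L_def\<close>)
  have Gfi: "Good M fi L" by (rule good_mono[OF L4(2)]) (use L1 L2 L3 L5 in \<open>simp add: L_def\<close>)
  have Ggi: "Good M gi L" by (rule good_mono[OF L5(2)]) (use L1 L2 L3 L4 in \<open>simp add: L_def\<close>)
  have L0: "L \<ge> 0" using Lge by simp
  have Gpow: "Good M (h ^^ m) (L ^ (6 * a))" if "m = r + a * a" "r \<le> 2 * a" for m r a
  proof -
    have Lp: "L ^ a \<ge> 0" using L0 by simp
    have "Good M ((fi ^^ a) \<circ> (gi ^^ a)) (L ^ a * L ^ a)"
      by (rule good_comp[OF good_funpow[OF Ggi L0] good_funpow[OF Gfi L0] Lp])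
    then have "Good M ((g ^^ a) \<circ> ((fi ^^ a) \<circ> (gi ^^ a))) (L ^ a * (L ^ a * L ^ a))"
      by (rule good_comp[OF _ good_funpow[OF Gg L0] Lp])
    then have "Good M ((f ^^ a) \<circ> ((g ^^ a) \<circ> ((fi ^^ a) \<circ> (gi ^^ a)))) (L ^ a * (L ^ a * (L ^ a * L ^ a)))"
      by (rule good_comp[OF _ good_funpow[OF Gf L0] Lp])
    then have G1: "Good M (h ^^ (a * a)) (L ^ a * (L ^ a * (L ^ a * L ^ a)))"
      by (rule good_cong) (simp add: sqid)
    have "Good M ((h ^^ r) \<circ> (h ^^ (a * a))) (L ^ r * (L ^ a * (L ^ a * (L ^ a * L ^ a))))"
      by (rule good_comp[OF G1 good_funpow[OF Gh L0]]) (use L0 in simp)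
    moreover have "(h ^^ r) \<circ> (h ^^ (a * a)) = h ^^ m" using that(1) by (simp add: funpow_add)
    moreover have "L ^ r * (L ^ a * (L ^ a * (L ^ a * L ^ a))) = L ^ (r + 4 * a)"
    proof -
      have "r + 4 * a = r + (a + (a + (a + a)))" by simp
      then show ?thesis by (simp only: power_add)
    qed
    ultimately have G2: "Good M (h ^^ m) (L ^ (r + 4 * a))" by simp
    show ?thesis
    proof (rule good_mono[OF G2])
      show "L ^ (r + 4 * a) \<le> L ^ (6 * a)" using Lge that(2) by (intro power_increasing) auto
    qed
  qed
  define K where "K = 6 * ln L + 1"
  have lnL: "ln L \<ge> 0" using Lge by simp
  have Kpos: "K > 0" using lnL unfolding K_def by simp
  have main: "ln (mderiv_norm M (h ^^ n) x) \<le> K * sqrt (real n) + 1" if x: "x \<in> M" for x n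
  proof -
    obtain a r where ar: "n = r + a * a" "r \<le> 2 * a" using sq_split by blast
    have bnd: "0 \<le> mderiv_norm M (h ^^ n) x \<and> mderiv_norm M (h ^^ n) x \<le> L ^ (6 * a)"
      using good_norm[OF Gpow[OF ar] x] L0 by simp
    have asq: "real a \<le> sqrt (real n)"
    proof (rule real_le_rsqrt)
      have "a * a \<le> n" using ar by simp
      then have "real (a * a) \<le> real n" by (rule of_nat_mono)
      then show "(real a)\<^sup>2 \<le> real n" by (simp add: power2_eq_square)
    qed
    have sq0: "sqrt (real n) \<ge> 0" by simp
    have rhs: "6 * real a * ln L \<le> K * sqrt (real n)"
    proof -
      have "6 * real a * ln L \<le> 6 * ln L * sqrt (real n)"
        using mult_left_mono[OF asq, of "6 * ln L"] lnL by (simp add: mult_ac)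
      also have "\<dots> \<le> K * sqrt (real n)" unfolding K_def using sq0 by (simp add: distrib_right)
      finally show ?thesis .
    qed
    show "ln (mderiv_norm M (h ^^ n) x) \<le> K * sqrt (real n) + 1"
    proof (cases "mderiv_norm M (h ^^ n) x = 0")
      case True
      have "0 \<le> K * sqrt (real n)" using Kpos sq0 by simp
      then show ?thesis using True by simp
    next
      case False
      then have pos: "mderiv_norm M (h ^^ n) x > 0" using bnd by simp
      have "ln (mderiv_norm M (h ^^ n) x) \<le> ln (L ^ (6 * a))"
        using pos bnd by (intro ln_mono) auto
      also have "\<dots> = 6 * real a * ln L" by (simp only: ln_realpow of_nat_mult)
      finally show ?thesis using rhs by simp
    qed
  qed
  show ?thesis using main Kpos by (intro exI[of _ K] exI[of _ "1::real"]) auto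
qed

end
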